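(* Let $\epsilon$ be a fixed constant with $0<\epsilon<1$ and let $d=o(\sqrt{n})$. Any randomized one-pass streaming algorithm that, on every input stream $S$ of length $n$ (over the binary alphabet), returns an estimate $\hat{\ell}$ satisfying $\hat{\ell}\le\ell_{max}\le(1+\epsilon)\hat{\ell}$ with probability at least $1-\frac{1}{n}$ must use $\Omega(d\log n)$ bits of space.
   Context: Streaming model: the symbols of the input string arrive one at a time and the algorithm keeps only its working memory, measured in bits. For a string $T$ of length $m$, $T^R$ denotes its reverse and $\mathsf{HAM}(T,T^R)=|\{i\in[m]: T[i]\neq T[m+1-i]\}|$. $T$ is a $d$-near-palindrome if $\mathsf{HAM}(T,T^R)\le d$. $\ell_{max}$ is the maximum length of a substring of the input that is a $d$-near-palindrome. *)

theory Defs
  imports "HOL-Probability.Probability" "HOL-Library.Landau_Symbols"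
begin

definition HAM_rev :: "bool list \<Rightarrow> nat" where
  "HAM_rev T = card {i. i < length T \<and> T ! i \<noteq> T ! (length T - 1 - i)}"

definition near_palindrome :: "nat \<Rightarrow> bool list \<Rightarrow> bool" where
  "near_palindrome d T \<longleftrightarrow> HAM_rev T \<le> d"

definition substr :: "bool list \<Rightarrow> nat \<Rightarrow> nat \<Rightarrow> bool list" where
  "substr S i j = take (j - i) (drop i S)"

definition l_max :: "nat \<Rightarrow> bool list \<Rightarrow> nat" where
  "l_max d S = Max {j - i | i j. i \<le> j \<and> j \<le> length S \<and> near_palindrome d (substr S i j)}"

text \<open>A randomized one-pass streaming algorithm with private coins.
  Its memory states are natural numbers; with s bits of space all states lie in {..<2^s}.
  init: random initial state; delta i q b: random next state after reading symbol b at
  position i (dependence on i only strengthens the model); out q: random estimate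
  produced from final state q.\<close>
definition uses_space ::
  "nat \<Rightarrow> nat pmf \<Rightarrow> (nat \<Rightarrow> nat \<Rightarrow> bool \<Rightarrow> nat pmf) \<Rightarrow> bool" where
  "uses_space s init delta \<longleftrightarrow>
     set_pmf init \<subseteq> {..<2^s} \<and>
     (\<forall>i q b. q < 2^s \<longrightarrow> set_pmf (delta i q b) \<subseteq> {..<2^s})"

fun run_states :: "nat pmf \<Rightarrow> (nat \<Rightarrow> nat \<Rightarrow> bool \<Rightarrow> nat pmf) \<Rightarrow> nat \<Rightarrow> bool list \<Rightarrow> nat pmf" where
  "run_states init delta i [] = init"
| "run_states init delta i (b # bs) =
     run_states (init \<bind> (\<lambda>q. delta i q b)) delta (Suc i) bs"

definition run_alg ::
  "nat pmf \<Rightarrow> (nat \<Rightarrow> nat \<Rightarrow> bool \<Rightarrow> nat pmf) \<Rightarrow> (nat \<Rightarrow> real pmf) \<Rightarrow> bool list \<Rightarrow> real pmf" where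
  "run_alg init delta out S = run_states init delta 0 S \<bind> out"

end

theory Submission
  imports Defs
begin

definition u :: "nat \<Rightarrow> bool" where "u r = (r mod 6 = 2 \<or> r mod 6 = 4 \<or> r mod 6 = 5)"

lemma ex6: "(\<exists>i<(6::nat). P i) \<longleftrightarrow> P 0 \<or> P 1 \<or> P 2 \<or> P 3 \<or> P 4 \<or> P 5"
proof
  assume "\<exists>i<6. P i"
  then obtain i where "i < 6" "P i" by blast
  then have "i = 0 \<or> i = 1 \<or> i = 2 \<or> i = 3 \<or> i = 4 \<or> i = 5" by linarith
  then show "P 0 \<or> P 1 \<or> P 2 \<or> P 3 \<or> P 4 \<or> P 5" using \<open>P i\<close> by blast
next
  assume "P 0 \<or> P 1 \<or> P 2 \<or> P 3 \<or> P 4 \<or> P 5"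
  then show "\<exists>i<6. P i"
    apply (elim disjE)
         apply (rule exI[of _ 0]; simp)
        apply (rule exI[of _ 1]; simp)
       apply (rule exI[of _ 2]; simp)
      apply (rule exI[of _ 3]; simp)
     apply (rule exI[of _ 4]; simp)
    apply (rule exI[of _ 5]; simp)
    done
qed

lemma six_cases: "(r::nat) < 6 \<Longrightarrow> r = 0 \<or> r = 1 \<or> r = 2 \<or> r = 3 \<or> r = 4 \<or> r = 5" by linarith

lemma fin_refl: "r < 6 \<Longrightarrow> e < 6 \<Longrightarrow> \<exists>i<6. u ((r + i) mod 6) \<noteq> u ((e + (5 - i)) mod 6)"
  unfolding ex6 u_def
  by (drule six_cases, drule six_cases, elim disjE; simp)

lemma fin_shift: "r < 6 \<Longrightarrow> 0 < t \<Longrightarrow> t < 6 \<Longrightarrow> \<exists>i<6. u ((r + i) mod 6) \<noteq> u ((r + i + t) mod 6)"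
  unfolding ex6 u_def
  by (drule six_cases, elim disjE; drule six_cases; elim disjE; simp)

lemma u_mod: "u (r mod 6) = u r" unfolding u_def by simp

lemma refl_block: assumes "a + 5 \<le> c" shows "\<exists>y. a \<le> y \<and> y < a + 6 \<and> u y \<noteq> u (c - y)"
proof -
  obtain i where i: "i < 6" "u ((a mod 6 + i) mod 6) \<noteq> u (((c - a - 5) mod 6 + (5 - i)) mod 6)"
    using fin_refl[of "a mod 6" "(c - a - 5) mod 6"] by (meson mod_less_divisor zero_less_numeral)
  have 1: "u (a + i) = u ((a mod 6 + i) mod 6)"
    by (metis mod_add_left_eq u_mod)
  have "c - (a + i) = (c - a - 5) + (5 - i)" using assms i by simp
  then have 2: "u (c - (a + i)) = u (((c - a - 5) mod 6 + (5 - i)) mod 6)"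
    by (metis mod_add_left_eq u_mod)
  show ?thesis using i 1 2 by (intro exI[of _ "a + i"]) auto
qed

lemma shift_block: assumes "\<not> 6 dvd (t::nat)" shows "\<exists>y. a \<le> y \<and> y < a + 6 \<and> u y \<noteq> u (y + t)"
proof -
  have t0: "0 < t mod 6" "t mod 6 < 6" using assms by (auto simp: dvd_eq_mod_eq_0)
  obtain i where i: "i < 6" "u ((a mod 6 + i) mod 6) \<noteq> u ((a mod 6 + i + t mod 6) mod 6)"
    using fin_shift[of "a mod 6" "t mod 6"] t0 by (meson mod_less_divisor zero_less_numeral)
  have 1: "u (a + i) = u ((a mod 6 + i) mod 6)"
    by (metis mod_add_left_eq u_mod)
  have 2: "u (a + i + t) = u ((a mod 6 + i + t mod 6) mod 6)"
    by (metis mod_add_left_eq mod_add_right_eq u_mod)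
  show ?thesis using i 1 2 by (intro exI[of _ "a + i"]) auto
qed

lemma u_shift: "6 dvd (t::nat) \<Longrightarrow> u (y + t) = u y"
  by (metis mod_add_self2 dvd_imp_mod_0 mod_add_right_eq add_0_right u_mod)

lemma block_count:
  assumes "\<And>b. b < K \<Longrightarrow> \<exists>y. a + 6*b \<le> y \<and> y < a + 6*b + 6 \<and> P y"
  shows "K \<le> card {y. a \<le> y \<and> y < a + 6*K \<and> P y}"
proof -
  define f where "f b = (SOME y. a + 6*b \<le> y \<and> y < a + 6*b + 6 \<and> P y)" for b
  have f: "a + 6*b \<le> f b \<and> f b < a + 6*b + 6 \<and> P (f b)" if "b < K" for b
    unfolding f_def using someI_ex[OF assms[OF that]] .
  have inj: "inj_on f {..<K}"
  proof (rule inj_onI)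
    fix b b' assume "b \<in> {..<K}" "b' \<in> {..<K}" "f b = f b'"
    then show "b = b'" using f[of b] f[of b'] by auto
  qed
  have "f ` {..<K} \<subseteq> {y. a \<le> y \<and> y < a + 6*K \<and> P y}"
  proof
    fix y assume "y \<in> f ` {..<K}"
    then obtain b where b: "b < K" "y = f b" by auto
    then show "y \<in> {y. a \<le> y \<and> y < a + 6*K \<and> P y}" using f[OF b(1)] by auto
  qed
  moreover have "finite {y. a \<le> y \<and> y < a + 6*K \<and> P y}" by (rule finite_subset[of _ "{..<a+6*K}"]) auto
  ultimately have "card (f ` {..<K}) \<le> card {y. a \<le> y \<and> y < a + 6*K \<and> P y}" by (rule card_mono[rotated])
  then show ?thesis using card_image[OF inj] by simp
qed

definition base :: "nat \<Rightarrow> nat \<Rightarrow> bool" where "base n y = u (min y (n - 1 - y))"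

lemma base_left: "2*y \<le> n - 1 \<Longrightarrow> base n y = u y"
proof -
  assume "2*y \<le> n - 1"
  then have "min y (n - 1 - y) = y" by linarith
  then show ?thesis unfolding base_def by simp
qed
lemma base_right: "n - 1 \<le> 2*y \<Longrightarrow> y \<le> n - 1 \<Longrightarrow> base n y = u (n - 1 - y)"
proof -
  assume "n - 1 \<le> 2*y" "y \<le> n - 1"
  then have "min y (n - 1 - y) = n - 1 - y" by linarith
  then show ?thesis unfolding base_def by simp
qed

lemma card_le1_filter:
  assumes "inj f" "finite X" "finite Y" "card X \<le> 1 \<or> card Y \<le> 1"
  shows "card {x\<in>X. f x \<in> Y} \<le> 1"
proof (cases "card X \<le> 1")
  case True
  then show ?thesis using card_mono[OF assms(2), of "{x\<in>X. f x \<in> Y}"] by auto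
next
  case False
  then have Y: "card Y \<le> 1" using assms(4) by auto
  have "card {x\<in>X. f x \<in> Y} = card (f ` {x\<in>X. f x \<in> Y})"
    using assms(1) by (simp add: card_image inj_on_def inj_def)
  also have "\<dots> \<le> card Y" by (rule card_mono[OF assms(3)]) auto
  finally show ?thesis using Y by simp
qed

definition gf :: "nat set \<Rightarrow> nat \<Rightarrow> nat \<Rightarrow> bool" where "gf F n y = (base n y \<noteq> (y \<in> F))"

lemma left_main:
  fixes n d k p q :: nat and A B :: "nat set"
  assumes finA: "finite A" and finB: "finite B"
    and zone: "\<And>z. z \<in> A \<union> B \<Longrightarrow> n + 4*(12*d+36) \<le> 4*z \<and> 2*z + 2*(12*d+36) + 3 \<le> n"
    and cardAB: "card A + card B = k + 1" and small1: "card A \<le> 1 \<or> card B \<le> 1"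
    and dk: "d + 1 \<le> 2*k" "2*k \<le> d + 2"
    and nbig: "100*(12*d+36) \<le> n"
    and win: "p < q" "p + q \<le> n" "n < 2*(q - p)"
    and cen: "p + q = n \<Longrightarrow> A \<inter> B = {}"
  shows "d < card {y. p \<le> y \<and> y < q \<and> gf (A \<union> (\<lambda>m. n - 1 - m) ` B) n y
                         \<noteq> gf (A \<union> (\<lambda>m. n - 1 - m) ` B) n (p + q - 1 - y)}"
proof -
  define D where "D = 12*d+36"
  define K where "K = 2*d+6"
  have DK: "D = 6*K" by (simp add: D_def K_def)
  define F where "F = A \<union> (\<lambda>m. n - 1 - m) ` B"
  define c where "c = p + q - 1"
  define \<delta> where "\<delta> = n - 1 - c"
  define h where "h = (n - 1) div 2"
  have h1: "2*h \<le> n - 1" "n \<le> 2*h + 2" unfolding h_def by auto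
  have cq: "c + 1 = p + q" using win unfolding c_def by simp
  have cn: "c + \<delta> + 1 = n" using win cq unfolding \<delta>_def by simp
  have p4: "4*p + 2*\<delta> < n" using win cq cn by simp
  have Dn: "100*D \<le> n" using nbig D_def by simp
  have zA: "\<And>z. z \<in> A \<Longrightarrow> n + 4*D \<le> 4*z \<and> 2*z + 2*D + 3 \<le> n" using zone D_def by auto
  have zB: "\<And>z. z \<in> B \<Longrightarrow> n + 4*D \<le> 4*z \<and> 2*z + 2*D + 3 \<le> n" using zone D_def by auto
  define MS where "MS = {y. p \<le> y \<and> y < q \<and> gf F n y \<noteq> gf F n (c - y)}"
  have finMS: "finite MS" unfolding MS_def by (rule finite_subset[of _ "{..<q}"]) auto
  have finF: "finite F" unfolding F_def using finA finB by simp
  have disjAB: "A \<inter> (\<lambda>m. n - 1 - m) ` B = {}"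
  proof -
    { fix a m assume "a \<in> A" "m \<in> B" "a = n - 1 - m"
      then have False using zA[of a] zB[of m] by linarith }
    then show ?thesis by blast
  qed
  have injB: "inj_on (\<lambda>m. n - 1 - m) B"
  proof (rule inj_onI)
    fix x y assume "x \<in> B" "y \<in> B" "n - 1 - x = n - 1 - y"
    then show "x = y" using zB[of x] zB[of y] by linarith
  qed
  have cardF: "card F = k + 1"
    unfolding F_def using card_Un_disjoint[OF finA _ disjAB] finB card_image[OF injB] cardAB by simp
  define cF where "cF = (\<lambda>f. c - f) ` F"
  have fincF: "finite cF" unfolding cF_def using finF by simp
  have cardcF: "card cF \<le> k + 1" unfolding cF_def using card_image_le[OF finF] cardF by simp
  have cardAff: "card (F \<union> cF) \<le> 2*(k+1)" using card_Un_le[of F cF] cardF cardcF by simp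
  have Aff_out: "c - y \<notin> F" if "y \<le> c" "y \<notin> cF" for y
  proof
    assume "c - y \<in> F"
    then have "c - (c - y) \<in> cF" unfolding cF_def by blast
    then show False using that by simp
  qed
  have mis_base: "y \<in> MS" if "p \<le> y" "y < q" "y \<notin> F" "y \<notin> cF" "base n y \<noteq> base n (c - y)" for y
  proof -
    have "y \<le> c" using that cq by simp
    then have "c - y \<notin> F" using Aff_out that by simp
    then show ?thesis unfolding MS_def gf_def using that by simp
  qed
  have from_range: "d < card MS"
    if blocks: "\<And>b. b < K \<Longrightarrow> \<exists>y. a0 + 6*b \<le> y \<and> y < a0 + 6*b + 6 \<and> base n y \<noteq> base n (c - y)"
    and rng: "\<And>y. a0 \<le> y \<Longrightarrow> y < a0 + 6*K \<Longrightarrow> p \<le> y \<and> y < q"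
    for a0
  proof -
    define BM where "BM = {y. a0 \<le> y \<and> y < a0 + 6*K \<and> base n y \<noteq> base n (c - y)}"
    have K1: "K \<le> card BM" unfolding BM_def by (rule block_count[OF blocks])
    have finBM: "finite BM" unfolding BM_def by (rule finite_subset[of _ "{..<a0+6*K}"]) auto
    have sub: "BM - (F \<union> cF) \<subseteq> MS"
      using mis_base rng unfolding BM_def by blast
    have "card BM \<le> card ((BM - (F \<union> cF)) \<union> (F \<union> cF))"
      by (rule card_mono) (use finBM finF fincF in auto)
    then have "card BM \<le> card (BM - (F \<union> cF)) + card (F \<union> cF)"
      using card_Un_le[of "BM - (F \<union> cF)" "F \<union> cF"] by linarith
    moreover have "card (BM - (F \<union> cF)) \<le> card MS" by (rule card_mono[OF finMS sub])
    ultimately show ?thesis using K1 cardAff dk K_def by arith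
  qed
  have goal: "d < card MS"
  proof (cases "D \<le> \<delta>")
    case True
    define a0 where "a0 = max p (c - h)"
    have rng': "p \<le> y \<and> y + p \<le> c \<and> 2*y \<le> n - 1 \<and> c \<le> y + h"
      if "a0 \<le> y" "y < a0 + 6*K" for y
    proof (cases "c - h \<le> p")
      case True
      then have "a0 = p" unfolding a0_def by simp
      then show ?thesis using that True h1 p4 Dn DK cn cq win by linarith
    next
      case False
      then have "a0 = c - h" unfolding a0_def by simp
      then show ?thesis using that False h1 p4 Dn DK cn cq win \<open>D \<le> \<delta>\<close> by linarith
    qed
    show ?thesis
    proof (rule from_range[of a0])
      fix b assume b: "b < K"
      have "a0 + 6*b + 5 \<le> c" using rng'[of "a0 + 6*b + 5"] b by linarith
      then obtain y where y: "a0 + 6*b \<le> y" "y < a0 + 6*b + 6" "u y \<noteq> u (c - y)"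
        using refl_block by blast
      have r: "p \<le> y \<and> y + p \<le> c \<and> 2*y \<le> n - 1 \<and> c \<le> y + h" using rng'[of y] y b by linarith
      then have "base n y = u y" "base n (c - y) = u (c - y)"
        using base_left[of y n] base_left[of "c - y" n] h1 by linarith+
      then show "\<exists>y. a0 + 6*b \<le> y \<and> y < a0 + 6*b + 6 \<and> base n y \<noteq> base n (c - y)"
        using y by auto
    next
      fix y assume "a0 \<le> y" "y < a0 + 6*K"
      then show "p \<le> y \<and> y < q" using rng'[of y] cq by linarith
    qed
  next
    case False
    then have dD: "\<delta> < D" by simp
    show ?thesis
    proof (cases "6 dvd \<delta>")
      case False
      have rng': "p \<le> y \<and> y < q \<and> 2*y \<le> n - 1 \<and> n \<le> 2*(c - y) \<and> y \<le> c"
        if "p \<le> y" "y < p + 6*K" for y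
        using that h1 p4 Dn DK cn cq win dD by linarith
      show ?thesis
      proof (rule from_range[of p])
        fix b assume b: "b < K"
        obtain y where y: "p + 6*b \<le> y" "y < p + 6*b + 6" "u y \<noteq> u (y + \<delta>)"
          using shift_block[OF False] by blast
        have r: "p \<le> y \<and> y < q \<and> 2*y \<le> n - 1 \<and> n \<le> 2*(c - y) \<and> y \<le> c"
          using rng'[of y] y b by linarith
        then have "base n y = u y" using base_left by blast
        moreover have "base n (c - y) = u (n - 1 - (c - y))" using r cn by (intro base_right) linarith+
        moreover have "n - 1 - (c - y) = y + \<delta>" using r cn by linarith
        ultimately show "\<exists>y. p + 6*b \<le> y \<and> y < p + 6*b + 6 \<and> base n y \<noteq> base n (c - y)"
          using y by auto
      next
        fix y assume "p \<le> y" "y < p + 6*K"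
        then show "p \<le> y \<and> y < q" using rng'[of y] by linarith
      qed
    next
      case True
      note six = True
      have Fwin: "p \<le> f \<and> f + p \<le> c" if "f \<in> F" for f
      proof -
        from that consider (a) "f \<in> A" | (b) m where "m \<in> B" "f = n - 1 - m" unfolding F_def by blast
        then show ?thesis
        proof cases
          case a then show ?thesis using zA[of f] p4 cn dD Dn by linarith
        next
          case b then show ?thesis using zB[of m] p4 cn dD Dn by linarith
        qed
      qed
      have Fbase: "base n f = base n (c - f)" if "f \<in> F" for f
      proof -
        from that consider (a) "f \<in> A" | (b) m where "m \<in> B" "f = n - 1 - m" unfolding F_def by blast
        then show ?thesis
        proof cases
          case a
          note z = zA[OF a]
          have 1: "base n f = u f" using z by (intro base_left) linarith
          have 2: "base n (c - f) = u (n - 1 - (c - f))" using z cn dD Dn by (intro base_right) linarith+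
          have 3: "n - 1 - (c - f) = f + \<delta>" using z cn dD Dn Fwin[OF that] by linarith
          show ?thesis using 1 2 3 u_shift[OF six] by simp
        next
          case b
          note z = zB[OF b(1)]
          have 1: "base n f = u (n - 1 - f)" using z b(2) by (intro base_right) linarith+
          have 2: "base n (c - f) = u (c - f)" using z b(2) cn dD Dn by (intro base_left) linarith
          have 3: "n - 1 - f = (c - f) + \<delta>" using z b(2) cn dD Dn Fwin[OF that] by linarith
          show ?thesis using 1 2 3 u_shift[OF six] by simp
        qed
      qed
      have cF_iff: "y \<in> cF \<longleftrightarrow> c - y \<in> F" if "y \<le> c" for y
      proof
        assume "y \<in> cF"
        then obtain f where "f \<in> F" "y = c - f" unfolding cF_def by blast
        then show "c - y \<in> F" using Fwin[of f] by (simp add: diff_diff_cancel)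
      next
        assume "c - y \<in> F"
        then have "c - (c - y) \<in> cF" unfolding cF_def by blast
        then show "y \<in> cF" using that by simp
      qed
      have AffW: "p \<le> y \<and> y + p \<le> c \<and> base n y = base n (c - y)" if yy: "y \<in> F \<union> cF" for y
      proof (cases "y \<in> F")
        case True then show ?thesis using Fwin Fbase by blast
      next
        case False
        then obtain f where f: "f \<in> F" "y = c - f" using yy unfolding cF_def by blast
        then have "c - y = f" using Fwin[OF f(1)] by simp
        moreover have "p \<le> y \<and> y + p \<le> c" using f Fwin[OF f(1)] by linarith
        ultimately show ?thesis using f Fbase[OF f(1)] by simp
      qed
      define Ds where "Ds = (F \<union> cF) - (F \<inter> cF)"
      have DsMS: "Ds \<subseteq> MS"
      proof
        fix y assume y: "y \<in> Ds"
        then have yA: "y \<in> F \<union> cF" unfolding Ds_def by blast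
        have w: "p \<le> y \<and> y + p \<le> c \<and> base n y = base n (c - y)" using AffW[OF yA] .
        have "(y \<in> F) \<noteq> (c - y \<in> F)" using y cF_iff[of y] w unfolding Ds_def by auto
        then show "y \<in> MS" unfolding MS_def gf_def using w cq by auto
      qed
      have injc: "inj_on (\<lambda>f. c - f) F"
      proof (rule inj_onI)
        fix x y assume "x \<in> F" "y \<in> F" "c - x = c - y"
        then show "x = y" using Fwin[of x] Fwin[of y] by linarith
      qed
      have cardcF': "card cF = k + 1" unfolding cF_def using card_image[OF injc] cardF by simp
      have cardDs: "card Ds + 2 * card (F \<inter> cF) = 2*(k+1)"
      proof -
        have "card (F \<union> cF) + card (F \<inter> cF) = card F + card cF"
          using card_Un_Int[OF finF fincF] by simp
        moreover have "card Ds = card (F \<union> cF) - card (F \<inter> cF)"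
          unfolding Ds_def by (rule card_Diff_subset) (use finF fincF in auto)
        moreover have "card (F \<inter> cF) \<le> card (F \<union> cF)" by (rule card_mono) (use finF fincF in auto)
        ultimately show ?thesis using cardF cardcF' by arith
      qed
      define E where "E = {a\<in>A. a + \<delta> \<in> B}"
      have cardE: "card E \<le> 1" unfolding E_def
        by (rule card_le1_filter[OF _ finA finB small1]) (simp add: inj_def)
      have finE: "finite E" unfolding E_def using finA by simp
      have inter: "F \<inter> cF \<subseteq> E \<union> (\<lambda>a. n - 1 - (a + \<delta>)) ` E"
      proof
        fix y assume y: "y \<in> F \<inter> cF"
        then have yc: "y \<le> c" using Fwin[of y] by auto
        have cy: "c - y \<in> F" using y cF_iff[OF yc] by blast
        from y consider (a) "y \<in> A" | (b) m where "m \<in> B" "y = n - 1 - m" unfolding F_def by blast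
        then show "y \<in> E \<union> (\<lambda>a. n - 1 - (a + \<delta>)) ` E"
        proof cases
          case a
          note z = zA[OF a]
          from cy consider (aa) "c - y \<in> A" | (ab) m where "m \<in> B" "c - y = n - 1 - m" unfolding F_def by blast
          then show ?thesis
          proof cases
            case aa then show ?thesis using zA[OF aa] z cn dD yc by linarith
          next
            case ab
            have "m = y + \<delta>" using ab zB[OF ab(1)] z cn yc by linarith
            then show ?thesis using a ab unfolding E_def by auto
          qed
        next
          case b
          note z = zB[OF b(1)]
          from cy consider (ba) "c - y \<in> A" | (bb) m' where "m' \<in> B" "c - y = n - 1 - m'" unfolding F_def by blast
          then show ?thesis
          proof cases
            case ba
            have e: "c - y + \<delta> = m" using b z cn dD Dn yc by linarith
            then have "c - y \<in> E" using ba b unfolding E_def by auto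
            moreover have "y = n - 1 - ((c - y) + \<delta>)" using e b by simp
            ultimately show ?thesis by blast
          next
            case bb then show ?thesis using zB[OF bb(1)] z b cn dD Dn yc by linarith
          qed
        qed
      qed
      have cardI: "card (F \<inter> cF) \<le> 2 * card E"
      proof -
        have "card (F \<inter> cF) \<le> card (E \<union> (\<lambda>a. n - 1 - (a + \<delta>)) ` E)"
          by (rule card_mono[OF _ inter]) (use finE in simp)
        also have "\<dots> \<le> card E + card ((\<lambda>a. n - 1 - (a + \<delta>)) ` E)" by (rule card_Un_le)
        also have "\<dots> \<le> card E + card E" using card_image_le[OF finE] by simp
        finally show ?thesis by simp
      qed
      show ?thesis
      proof (cases "\<delta> = 0")
        case True
        then have "p + q = n" using cn cq by simp
        then have "E = {}" using cen True unfolding E_def by auto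
        then have "card Ds = 2*(k+1)" using cardDs cardI by simp
        then have "d < card Ds" using dk by simp
        also have "\<dots> \<le> card MS" by (rule card_mono[OF finMS DsMS])
        finally show ?thesis .
      next
        case False
        then have d6: "6 \<le> \<delta>" using six by (auto dest: dvd_imp_le)
        have notAff: "z \<notin> F \<union> cF" if "c \<le> z + h" "z \<le> h" for z
        proof
          assume "z \<in> F \<union> cF"
          then consider (a) "z \<in> A" | (b) m where "m \<in> B" "z = n - 1 - m"
            | (c) a where "a \<in> A" "z = c - a" | (d) m where "m \<in> B" "z = c - (n - 1 - m)"
            unfolding cF_def F_def by blast
          then show False
          proof cases
            case a then show False using zA[OF a] that cn dD h1 by linarith
          next
            case b then show False using zB[OF b(1)] b(2) that cn dD h1 by linarith
          next
            case c then show False using zA[OF c(1)] c(2) that cn dD h1 by linarith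
          next
            case d then show False using zB[OF d(1)] d(2) that cn dD h1 by linarith
          qed
        qed
        have s0: "c - h + 5 \<le> c" using h1 cn dD Dn d6 by linarith
        obtain y0 where y0: "c - h \<le> y0" "y0 < c - h + 6" "u y0 \<noteq> u (c - y0)"
          using refl_block[OF s0] by blast
        have yf: "c \<le> y0 + h" "y0 \<le> h" "2*y0 \<le> n - 1" "2*(c - y0) \<le> n - 1" "y0 \<le> c"
          "p \<le> y0" "y0 < q" "p \<le> c - y0" "c - y0 < q" "c \<le> (c - y0) + h" "c - y0 \<le> h"
          using y0(1,2) h1 cn dD Dn d6 p4 cq by linarith+
        have b0: "base n y0 \<noteq> base n (c - y0)"
          using base_left[OF yf(3)] base_left[OF yf(4)] y0(3) by simp
        have n1: "y0 \<notin> F \<union> cF" using notAff yf by blast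
        have n2: "c - y0 \<notin> F \<union> cF" using notAff yf by blast
        have m1: "y0 \<in> MS" using mis_base[of y0] n1 b0 yf by blast
        have m2: "c - y0 \<in> MS" using mis_base[of "c - y0"] n2 b0 yf by (simp add: diff_diff_cancel)
        have ne: "y0 \<noteq> c - y0" using y0(3) by auto
        have sub: "Ds \<union> {y0, c - y0} \<subseteq> MS" using DsMS m1 m2 by blast
        have disj: "Ds \<inter> {y0, c - y0} = {}" using n1 n2 unfolding Ds_def by blast
        have finDs: "finite Ds" unfolding Ds_def using finF fincF by simp
        have "card (Ds \<union> {y0, c - y0}) = card Ds + 2"
          using card_Un_disjoint[OF finDs _ disj] ne by simp
        moreover have "card (Ds \<union> {y0, c - y0}) \<le> card MS" by (rule card_mono[OF finMS sub])
        ultimately show ?thesis using cardDs cardI cardE dk by arith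
      qed
    qed
  qed
  show ?thesis using goal unfolding MS_def F_def c_def .
qed

lemma prob_bind_sum:
  fixes M :: "'a pmf" and N :: "'a \<Rightarrow> 'b pmf"
  assumes "finite A" "set_pmf M \<subseteq> A"
  shows "measure_pmf.prob (bind_pmf M N) X = (\<Sum>a\<in>A. pmf M a * measure_pmf.prob (N a) X)"
proof -
  have "emeasure (measure_pmf (bind_pmf M N)) X = (\<Sum>a\<in>A. emeasure (measure_pmf (N a)) X * pmf M a)"
    unfolding emeasure_bind_pmf
    by (rule nn_integral_measure_pmf_support) (use assms in auto)
  also have "\<dots> = (\<Sum>a\<in>A. ennreal (pmf M a * measure_pmf.prob (N a) X))"
    by (simp add: measure_pmf.emeasure_eq_measure ennreal_mult' mult.commute)
  also have "\<dots> = ennreal (\<Sum>a\<in>A. pmf M a * measure_pmf.prob (N a) X)"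
    by (rule sum_ennreal) auto
  finally show ?thesis
    by (simp add: measure_def sum_nonneg)
qed

lemma run_states_append:
  "run_states init delta i (xs @ ys) = run_states (run_states init delta i xs) delta (i + length xs) ys"
  by (induction xs arbitrary: init i) auto

lemma run_states_bind:
  "run_states init delta i ys = init \<bind> (\<lambda>\<sigma>. run_states (return_pmf \<sigma>) delta i ys)"
proof (induction ys arbitrary: init i)
  case Nil then show ?case by (simp add: bind_return_pmf')
next
  case (Cons b bs)
  show ?case
    apply (simp only: run_states.simps)
    apply (subst Cons[of "init \<bind> (\<lambda>q. delta i q b)"])
    apply (simp add: bind_assoc_pmf bind_return_pmf)
    apply (subst Cons[of "delta i _ b"])
    apply simp
    done
qed

lemma run_states_space:
  assumes "uses_space s init delta"
  shows "set_pmf (run_states init delta i xs) \<subseteq> {..<2^s}"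
  using assms
proof (induction xs arbitrary: init i)
  case Nil then show ?case by (simp add: uses_space_def)
next
  case (Cons b bs)
  have "uses_space s (init \<bind> (\<lambda>q. delta i q b)) delta"
    using Cons.prems unfolding uses_space_def by (fastforce simp: subset_iff)
  then show ?case using Cons.IH by simp
qed

lemma fooling:
  fixes Fam :: "'x set" and pre :: "'x \<Rightarrow> bool list" and Q :: "'q set"
    and suf :: "'q \<Rightarrow> bool list" and Win :: "'x \<Rightarrow> 'q \<Rightarrow> real set"
  assumes space: "uses_space s init delta"
    and fin: "finite Q" and npos: "n > 0" and Qsmall: "2 * real (card Q) < real n"
    and lenpre: "\<And>x. x \<in> Fam \<Longrightarrow> length (pre x) = M"
    and correct: "\<And>x q. x \<in> Fam \<Longrightarrow> q \<in> Q \<Longrightarrow>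
        measure_pmf.prob (run_alg init delta out (pre x @ suf q)) (Win x q) \<ge> 1 - 1 / real n"
    and dist: "\<And>x x'. x \<in> Fam \<Longrightarrow> x' \<in> Fam \<Longrightarrow> x \<noteq> x' \<Longrightarrow> \<exists>q\<in>Q. Win x q \<inter> Win x' q = {}"
  shows "card Fam \<le> 2 ^ s"
proof -
  define \<nu> where "\<nu> \<sigma> q = run_states (return_pmf \<sigma>) delta M (suf q) \<bind> out" for \<sigma> q
  define \<mu> where "\<mu> x = run_states init delta 0 (pre x)" for x
  define wr where "wr x \<sigma> q = 1 - measure_pmf.prob (\<nu> \<sigma> q) (Win x q)" for x \<sigma> q
  define S where "S = {..<(2::nat)^s}"
  have finS: "finite S" by (simp add: S_def)
  have supp: "set_pmf (\<mu> x) \<subseteq> S" for x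
    unfolding \<mu>_def S_def by (rule run_states_space[OF space])
  have wr_nn: "wr x \<sigma> q \<ge> 0" for x \<sigma> q
    unfolding wr_def by (simp add: measure_pmf.prob_le_1)
  have split: "run_alg init delta out (pre x @ suf q) = \<mu> x \<bind> (\<lambda>\<sigma>. \<nu> \<sigma> q)" if "x \<in> Fam" for x q
    unfolding run_alg_def \<mu>_def \<nu>_def
    apply (simp add: run_states_append lenpre[OF that])
    apply (subst run_states_bind[of "run_states init delta 0 (pre x)"])
    apply (simp add: bind_assoc_pmf)
    done
  have good: "\<exists>\<sigma>\<in>S. (\<Sum>q\<in>Q. wr x \<sigma> q) < 1/2" if x: "x \<in> Fam" for x
  proof (rule ccontr)
    assume "\<not> ?thesis"
    then have ge: "\<And>\<sigma>. \<sigma> \<in> S \<Longrightarrow> (\<Sum>q\<in>Q. wr x \<sigma> q) \<ge> 1/2" by force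
    have "(\<Sum>\<sigma>\<in>S. pmf (\<mu> x) \<sigma> * (\<Sum>q\<in>Q. wr x \<sigma> q))
          = (\<Sum>q\<in>Q. (\<Sum>\<sigma>\<in>S. pmf (\<mu> x) \<sigma>) - (\<Sum>\<sigma>\<in>S. pmf (\<mu> x) \<sigma> * measure_pmf.prob (\<nu> \<sigma> q) (Win x q)))"
      unfolding wr_def by (simp add: sum_distrib_left sum_subtractf right_diff_distrib sum.swap[of _ S Q] mult.commute)
    also have "\<dots> = (\<Sum>q\<in>Q. 1 - measure_pmf.prob (run_alg init delta out (pre x @ suf q)) (Win x q))"
      using split[OF x] sum_pmf_eq_1[OF finS supp] by (simp add: prob_bind_sum[OF finS supp])
    also have "\<dots> \<le> (\<Sum>q\<in>Q. 1 / real n)"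
      by (rule sum_mono) (use correct[OF x] in force)
    also have "\<dots> = real (card Q) / real n" by simp
    also have "\<dots> < 1/2" using Qsmall npos by (simp add: field_simps)
    finally have lt: "(\<Sum>\<sigma>\<in>S. pmf (\<mu> x) \<sigma> * (\<Sum>q\<in>Q. wr x \<sigma> q)) < 1/2" .
    have "(\<Sum>\<sigma>\<in>S. pmf (\<mu> x) \<sigma> * (1/2)) \<le> (\<Sum>\<sigma>\<in>S. pmf (\<mu> x) \<sigma> * (\<Sum>q\<in>Q. wr x \<sigma> q))"
      by (rule sum_mono, rule mult_left_mono) (use ge in auto)
    moreover have "(\<Sum>\<sigma>\<in>S. pmf (\<mu> x) \<sigma> * (1/2)) = 1/2"
      using sum_pmf_eq_1[OF finS supp] by (simp add: sum_divide_distrib[symmetric])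
    ultimately show False using lt by linarith
  qed
  then obtain f where f: "\<And>x. x \<in> Fam \<Longrightarrow> f x \<in> S \<and> (\<Sum>q\<in>Q. wr x (f x) q) < 1/2"
    by metis
  have single: "wr x (f x) q < 1/2" if "x \<in> Fam" "q \<in> Q" for x q
  proof -
    have "wr x (f x) q \<le> (\<Sum>q\<in>Q. wr x (f x) q)"
      by (rule member_le_sum) (use that fin wr_nn in auto)
    then show ?thesis using f[OF that(1)] by linarith
  qed
  have inj: "inj_on f Fam"
  proof (rule inj_onI, rule ccontr)
    fix x x' assume xx: "x \<in> Fam" "x' \<in> Fam" "f x = f x'" "x \<noteq> x'"
    then obtain q where q: "q \<in> Q" "Win x q \<inter> Win x' q = {}" using dist by blast
    have "measure_pmf.prob (\<nu> (f x) q) (Win x q \<union> Win x' q)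
          = measure_pmf.prob (\<nu> (f x) q) (Win x q) + measure_pmf.prob (\<nu> (f x) q) (Win x' q)"
      using q(2) by (intro measure_pmf.finite_measure_Union) auto
    moreover have "measure_pmf.prob (\<nu> (f x) q) (Win x q \<union> Win x' q) \<le> 1"
      by (rule measure_pmf.prob_le_1)
    moreover have "wr x (f x) q < 1/2" "wr x' (f x') q < 1/2" using single[OF xx(1) q(1)] single[OF xx(2) q(1)] by auto
    ultimately show False unfolding wr_def using xx(3) by simp
  qed
  have "card Fam = card (f ` Fam)" using inj by (simp add: card_image)
  also have "\<dots> \<le> card S" by (rule card_mono[OF finS]) (use f in auto)
  also have "\<dots> = 2 ^ s" by (simp add: S_def)
  finally show ?thesis .
qed

lemma HAM_map:
  assumes "p \<le> q" "q \<le> n"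
  shows "HAM_rev (substr (map g [0..<n]) p q) = card {y. p \<le> y \<and> y < q \<and> g y \<noteq> g (p + q - 1 - y)}"
proof -
  have s: "substr (map g [0..<n]) p q = map g [p..<q]"
    unfolding substr_def using assms by (simp add: drop_map take_map)
  have "HAM_rev (map g [p..<q]) = card {i. i < q - p \<and> g (p + i) \<noteq> g (p + (q - p - 1 - i))}"
    unfolding HAM_rev_def by (rule arg_cong[where f=card]) (auto simp: nth_upt)
  also have "\<dots> = card ((\<lambda>i. p + i) ` {i. i < q - p \<and> g (p + i) \<noteq> g (p + (q - p - 1 - i))})"
    by (rule card_image[symmetric]) (simp add: inj_on_def)
  also have "(\<lambda>i. p + i) ` {i. i < q - p \<and> g (p + i) \<noteq> g (p + (q - p - 1 - i))}
      = {y. p \<le> y \<and> y < q \<and> g y \<noteq> g (p + q - 1 - y)}"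
  proof (rule set_eqI, rule iffI)
    fix y assume "y \<in> (\<lambda>i. p + i) ` {i. i < q - p \<and> g (p + i) \<noteq> g (p + (q - p - 1 - i))}"
    then obtain i where "i < q - p" "g (p + i) \<noteq> g (p + (q - p - 1 - i))" "y = p + i" by blast
    moreover have "p + (q - p - 1 - i) = p + q - 1 - (p + i)" using \<open>i < q - p\<close> by simp
    ultimately show "y \<in> {y. p \<le> y \<and> y < q \<and> g y \<noteq> g (p + q - 1 - y)}" by auto
  next
    fix y assume y: "y \<in> {y. p \<le> y \<and> y < q \<and> g y \<noteq> g (p + q - 1 - y)}"
    then have "y - p < q - p" "p + (y - p) = y" "p + (q - p - 1 - (y - p)) = p + q - 1 - y" by auto
    then show "y \<in> (\<lambda>i. p + i) ` {i. i < q - p \<and> g (p + i) \<noteq> g (p + (q - p - 1 - i))}"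
      using y by (intro image_eqI[of _ _ "y - p"]) auto
  qed
  finally show ?thesis using s by simp
qed

lemma MS_reflect:
  fixes p q n c c' a b :: nat and g :: "nat \<Rightarrow> bool"
  assumes pq: "p < q" "q \<le> n" and cc: "c + 1 = p + q" "c' + 1 = a + b" and ab: "a + q = n" "b + p = n"
  shows "card {y. p \<le> y \<and> y < q \<and> g y \<noteq> g (c - y)}
       = card {y. a \<le> y \<and> y < b \<and> g (n - 1 - y) \<noteq> g (n - 1 - (c' - y))}"
proof -
  let ?S = "{y. a \<le> y \<and> y < b \<and> g (n - 1 - y) \<noteq> g (n - 1 - (c' - y))}"
  have bij: "bij_betw (\<lambda>y. n - 1 - y) ?S {y. p \<le> y \<and> y < q \<and> g y \<noteq> g (c - y)}"
  proof (rule bij_betw_byWitness[where f' = "\<lambda>y. n - 1 - y"])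
    show "\<forall>y\<in>?S. n - 1 - (n - 1 - y) = y" using ab pq by auto
    show "\<forall>y\<in>{y. p \<le> y \<and> y < q \<and> g y \<noteq> g (c - y)}. n - 1 - (n - 1 - y) = y" using ab pq by auto
    show "(\<lambda>y. n - 1 - y) ` ?S \<subseteq> {y. p \<le> y \<and> y < q \<and> g y \<noteq> g (c - y)}"
    proof
      fix x assume "x \<in> (\<lambda>y. n - 1 - y) ` ?S"
      then obtain z where z: "z \<in> ?S" "x = n - 1 - z" by (rule imageE)
      then have z1: "a \<le> z" "z < b" and z3: "g (n - 1 - z) \<noteq> g (n - 1 - (c' - z))" by auto
      have xz: "x + z + 1 = n" using z1 z(2) ab pq by linarith
      have e2: "n - 1 - (c' - z) = c - x" using z1 xz ab cc pq by linarith
      have b: "p \<le> x" "x < q" using z1 xz ab pq by linarith+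
      have "g x \<noteq> g (c - x)" using z3 unfolding e2 z(2)[symmetric] .
      then show "x \<in> {y. p \<le> y \<and> y < q \<and> g y \<noteq> g (c - y)}" using b by blast
    qed
    show "(\<lambda>y. n - 1 - y) ` {y. p \<le> y \<and> y < q \<and> g y \<noteq> g (c - y)} \<subseteq> ?S"
    proof
      fix x assume "x \<in> (\<lambda>y. n - 1 - y) ` {y. p \<le> y \<and> y < q \<and> g y \<noteq> g (c - y)}"
      then obtain z where z: "z \<in> {y. p \<le> y \<and> y < q \<and> g y \<noteq> g (c - y)}" "x = n - 1 - z" by (rule imageE)
      then have z1: "p \<le> z" "z < q" and z3: "g z \<noteq> g (c - z)" by auto
      have xz: "x + z + 1 = n" using z1 z(2) ab pq by linarith
      have e1: "n - 1 - x = z" using xz by linarith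
      have e2: "n - 1 - (c' - x) = c - z" using z1 xz ab cc pq by linarith
      have b: "a \<le> x" "x < b" using z1 xz ab pq by linarith+
      have "g (n - 1 - x) \<noteq> g (n - 1 - (c' - x))" unfolding e1 e2 using z3 .
      then show "x \<in> ?S" using b by blast
    qed
  qed
  show ?thesis using bij_betw_same_card[OF bij] by simp
qed

lemma base_sym: "y < n \<Longrightarrow> base n (n - 1 - y) = base n y"
  unfolding base_def by (simp add: min.commute)

lemma gf_refl:
  assumes "w < n" "\<And>z. z \<in> X \<union> {j} \<Longrightarrow> z < n"
  shows "gf (X \<union> (\<lambda>m. n - 1 - m) ` {j}) n (n - 1 - w) = gf ({j} \<union> (\<lambda>m. n - 1 - m) ` X) n w"
proof -
  have 1: "(n - 1 - w \<in> X \<union> (\<lambda>m. n - 1 - m) ` {j}) = (w \<in> {j} \<union> (\<lambda>m. n - 1 - m) ` X)"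
  proof
    assume "n - 1 - w \<in> X \<union> (\<lambda>m. n - 1 - m) ` {j}"
    then consider "n - 1 - w \<in> X" | "n - 1 - w = n - 1 - j" by blast
    then show "w \<in> {j} \<union> (\<lambda>m. n - 1 - m) ` X"
    proof cases
      case 1
      have "w = n - 1 - (n - 1 - w)" using assms(1) by linarith
      then show ?thesis using 1 by blast
    next
      case 2
      then have "w = j" using assms by (metis Un_insert_right insertI1 diff_diff_cancel less_imp_le_nat Suc_pred' gr_implies_not0 neq0_conv le_add_diff_inverse less_Suc_eq_le not_less_eq_eq) 
      then show ?thesis by blast
    qed
  next
    assume "w \<in> {j} \<union> (\<lambda>m. n - 1 - m) ` X"
    then consider "w = j" | x where "x \<in> X" "w = n - 1 - x" by blast
    then show "n - 1 - w \<in> X \<union> (\<lambda>m. n - 1 - m) ` {j}"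
    proof cases
      case 1 then show ?thesis by blast
    next
      case 2
      have "x < n" using assms(2) 2(1) by blast
      then have "n - 1 - w = x" using 2 by linarith
      then show ?thesis using 2 by blast
    qed
  qed
  show ?thesis unfolding gf_def using 1 base_sym[OF assms(1)] by simp
qed


lemma no_lemma:
  fixes n d k j p q :: nat and X :: "nat set"
  assumes finX: "finite X" and jX: "j \<notin> X" and cardX: "card X = k"
    and zone: "\<And>z. z \<in> X \<union> {j} \<Longrightarrow> n + 4*(12*d+36) \<le> 4*z \<and> 2*z + 2*(12*d+36) + 3 \<le> n"
    and dk: "d + 1 \<le> 2*k" "2*k \<le> d + 2"
    and nbig: "100*(12*d+36) \<le> n"
    and win: "p \<le> q" "q \<le> n" "n < 2*(q - p)"
  shows "d < HAM_rev (substr (map (gf (X \<union> (\<lambda>m. n - 1 - m) ` {j}) n) [0..<n]) p q)"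
proof -
  have pq: "p < q" using win by linarith
  define G where "G = gf (X \<union> (\<lambda>m. n - 1 - m) ` {j}) n"
  have H: "HAM_rev (substr (map G [0..<n]) p q) = card {y. p \<le> y \<and> y < q \<and> G y \<noteq> G (p + q - 1 - y)}"
    by (rule HAM_map[OF win(1,2)])
  show ?thesis
  proof (cases "p + q \<le> n")
    case True
    have "d < card {y. p \<le> y \<and> y < q \<and> gf (X \<union> (\<lambda>m. n - 1 - m) ` {j}) n y
                         \<noteq> gf (X \<union> (\<lambda>m. n - 1 - m) ` {j}) n (p + q - 1 - y)}"
      by (rule left_main[OF finX _ zone _ _ dk nbig pq True win(3)]) (use cardX jX in auto)
    then show ?thesis using H unfolding G_def by simp
  next
    case False
    define a where "a = n - q"
    define b where "b = n - p"
    define c' where "c' = a + b - 1"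
    have ab: "a + q = n" "b + p = n" using win unfolding a_def b_def by auto
    have c1: "p + q - 1 + 1 = p + q" "c' + 1 = a + b" using pq False ab unfolding c'_def by auto
    have R: "card {y. p \<le> y \<and> y < q \<and> G y \<noteq> G (p + q - 1 - y)}
       = card {y. a \<le> y \<and> y < b \<and> G (n - 1 - y) \<noteq> G (n - 1 - (c' - y))}"
      by (rule MS_reflect[OF pq win(2) c1 ab])
    have zlt: "\<And>z. z \<in> X \<union> {j} \<Longrightarrow> z < n" using zone by fastforce
    have eqs: "{y. a \<le> y \<and> y < b \<and> G (n - 1 - y) \<noteq> G (n - 1 - (c' - y))}
      = {y. a \<le> y \<and> y < b \<and> gf ({j} \<union> (\<lambda>m. n - 1 - m) ` X) n y \<noteq> gf ({j} \<union> (\<lambda>m. n - 1 - m) ` X) n (a + b - 1 - y)}"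
    proof -
      have "G (n - 1 - y) = gf ({j} \<union> (\<lambda>m. n - 1 - m) ` X) n y"
           "G (n - 1 - (c' - y)) = gf ({j} \<union> (\<lambda>m. n - 1 - m) ` X) n (a + b - 1 - y)"
        if "a \<le> y" "y < b" for y
      proof -
        show "G (n - 1 - y) = gf ({j} \<union> (\<lambda>m. n - 1 - m) ` X) n y"
          unfolding G_def
          apply (rule gf_refl)
          using that ab win apply linarith
          using zlt apply blast
          done
        have "c' - y < n" using that ab c1 False by linarith
        then show "G (n - 1 - (c' - y)) = gf ({j} \<union> (\<lambda>m. n - 1 - m) ` X) n (a + b - 1 - y)"
          unfolding G_def c'_def
          apply (rule gf_refl)
          using \<open>c' - y < n\<close> c'_def apply simp
          using zlt apply blast
          done
      qed
      then show ?thesis by auto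
    qed
    have ab2: "a < b" "a + b \<le> n" "n < 2*(b - a)" using ab win pq False by linarith+
    have "d < card {y. a \<le> y \<and> y < b \<and> gf ({j} \<union> (\<lambda>m. n - 1 - m) ` X) n y \<noteq> gf ({j} \<union> (\<lambda>m. n - 1 - m) ` X) n (a + b - 1 - y)}"
      by (rule left_main[OF _ finX _ _ _ dk nbig ab2]) (use cardX zone ab2 False ab in auto)
    then show ?thesis using H R eqs unfolding G_def by simp
  qed
qed

lemma yes_lemma:
  fixes n d k j :: nat and X :: "nat set"
  assumes finX: "finite X" and jX: "j \<in> X" and cardX: "card X = k"
    and zlt: "\<And>z. z \<in> X \<Longrightarrow> z < n" and dk: "2*k \<le> d + 2"
  shows "HAM_rev (map (gf (X \<union> (\<lambda>m. n - 1 - m) ` {j}) n) [0..<n]) \<le> d"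
proof -
  define G where "G = gf (X \<union> (\<lambda>m. n - 1 - m) ` {j}) n"
  have s: "substr (map G [0..<n]) 0 n = map G [0..<n]" unfolding substr_def by simp
  have H: "HAM_rev (map G [0..<n]) = card {y. 0 \<le> y \<and> y < n \<and> G y \<noteq> G (0 + n - 1 - y)}"
    using HAM_map[of 0 n n G] s by simp
  have jn: "j < n" using zlt jX by blast
  have sub: "{y. 0 \<le> y \<and> y < n \<and> G y \<noteq> G (0 + n - 1 - y)} \<subseteq> (X - {j}) \<union> (\<lambda>m. n - 1 - m) ` (X - {j})"
  proof
    fix y assume y: "y \<in> {y. 0 \<le> y \<and> y < n \<and> G y \<noteq> G (0 + n - 1 - y)}"
    then have yn: "y < n" and ne: "G y \<noteq> G (n - 1 - y)" by auto
    have bs: "base n (n - 1 - y) = base n y" by (rule base_sym[OF yn])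
    have ne2: "(y \<in> X \<union> (\<lambda>m. n - 1 - m) ` {j}) \<noteq> (n - 1 - y \<in> X \<union> (\<lambda>m. n - 1 - m) ` {j})"
      using ne bs unfolding G_def gf_def by auto
    have yy: "n - 1 - (n - 1 - y) = y" using yn by linarith
    show "y \<in> (X - {j}) \<union> (\<lambda>m. n - 1 - m) ` (X - {j})"
    proof (cases "y \<in> X")
      case True
      show ?thesis
      proof (cases "y = j")
        case True
        then show ?thesis using ne2 jX by auto
      next
        case False then show ?thesis using True by blast
      qed
    next
      case False
      show ?thesis
      proof (cases "y = n - 1 - j")
        case True
        then have "n - 1 - y = j" using jn by linarith
        then have "n - 1 - y \<in> X \<union> (\<lambda>m. n - 1 - m) ` {j}" using jX by simp
        moreover have "y \<in> X \<union> (\<lambda>m. n - 1 - m) ` {j}" using True by simp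
        ultimately show ?thesis using ne2 by blast
      next
        case F2: False
        then have "y \<notin> X \<union> (\<lambda>m. n - 1 - m) ` {j}" using False by auto
        then have m: "n - 1 - y \<in> X \<union> (\<lambda>m. n - 1 - m) ` {j}" using ne2 by blast
        have "n - 1 - y \<noteq> n - 1 - j"
        proof
          assume "n - 1 - y = n - 1 - j"
          then have "y = j" using yn jn by linarith
          then show False using False jX by simp
        qed
        moreover have "n - 1 - y \<noteq> j" using F2 yn jn by linarith
        ultimately have "n - 1 - y \<in> X - {j}" using m by auto
        then show ?thesis using yy by (intro UnI2 image_eqI[of _ _ "n - 1 - y"]) auto
      qed
    qed
  qed
  have "card {y. 0 \<le> y \<and> y < n \<and> G y \<noteq> G (0 + n - 1 - y)} \<le> card ((X - {j}) \<union> (\<lambda>m. n - 1 - m) ` (X - {j}))"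
    by (rule card_mono[OF _ sub]) (use finX in simp)
  also have "\<dots> \<le> card (X - {j}) + card ((\<lambda>m. n - 1 - m) ` (X - {j}))" by (rule card_Un_le)
  also have "\<dots> \<le> 2 * card (X - {j})" using card_image_le[of "X - {j}" "\<lambda>m. n - 1 - m"] finX by simp
  also have "\<dots> = 2 * (k - 1)" using cardX jX finX by simp
  also have "\<dots> \<le> d" using dk by simp
  finally show ?thesis using H unfolding G_def by simp
qed

lemma lmax_le:
  assumes "\<And>p q. p \<le> q \<Longrightarrow> q \<le> length S \<Longrightarrow> near_palindrome d (substr S p q) \<Longrightarrow> 2*(q - p) \<le> length S"
  shows "2 * l_max d S \<le> length S"
proof -
  define L where "L = {j - i | i j. i \<le> j \<and> j \<le> length S \<and> near_palindrome d (substr S i j)}"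
  have fin: "finite L" unfolding L_def by (rule finite_subset[of _ "{..length S}"]) auto
  have "0 \<in> L" unfolding L_def
    by (rule CollectI, rule exI[of _ 0], rule exI[of _ 0])
       (simp add: near_palindrome_def HAM_rev_def substr_def)
  then have ne: "L \<noteq> {}" by blast
  have "Max L \<in> L" using Max_in[OF fin ne] .
  then obtain i j where "Max L = j - i" "i \<le> j" "j \<le> length S" "near_palindrome d (substr S i j)"
    unfolding L_def by blast
  then show ?thesis using assms unfolding l_max_def L_def[symmetric] by metis
qed

lemma lmax_full:
  assumes "near_palindrome d S"
  shows "l_max d S = length S"
proof -
  define L where "L = {j - i | i j. i \<le> j \<and> j \<le> length S \<and> near_palindrome d (substr S i j)}"
  have fin: "finite L" unfolding L_def by (rule finite_subset[of _ "{..length S}"]) auto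
  have "length S \<in> L" unfolding L_def
    by (rule CollectI, rule exI[of _ 0], rule exI[of _ "length S"]) (simp add: substr_def assms)
  moreover have "\<forall>x\<in>L. x \<le> length S" unfolding L_def by auto
  ultimately have "Max L = length S" using fin by (intro Max_eqI) auto
  then show ?thesis unfolding l_max_def L_def .
qed

lemma sqrt_facts:
  assumes "1000000 \<le> n"
  shows "1000 \<le> sqrt (real n)" "real n = sqrt (real n) * sqrt (real n)"
proof -
  have "sqrt 1000000 \<le> sqrt (real n)" using assms by (subst real_sqrt_le_iff) simp
  moreover have "sqrt (1000000::real) = 1000"
    by (rule real_sqrt_unique) simp_all
  ultimately show "1000 \<le> sqrt (real n)" by simp
  show "real n = sqrt (real n) * sqrt (real n)" by simp
qed

lemma size_facts:
  fixes n dd :: nat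
  assumes hd: "real dd \<le> sqrt (real n) / 1000" and hn: "1000000 \<le> n"
  shows "100*(12*dd+36) \<le> n" "real (dd div 2 + 1) \<le> sqrt (real n)"
proof -
  note sf = sqrt_facts[OF hn]
  have "1000 * sqrt (real n) \<le> sqrt (real n) * sqrt (real n)"
    using sf(1) by (intro mult_right_mono) auto
  then have n1: "1000 * sqrt (real n) \<le> real n" using sf(2) by linarith
  have "12*real dd \<le> 12 * (sqrt (real n) / 1000)" using hd by linarith
  then have "1200*real dd+3600 \<le> real n" using n1 sf(1) by linarith
  then have "100*(12*real dd+36) \<le> real n" by simp
  moreover have "real (100*(12*dd+36)) = 100*(12*real dd+36)" by simp
  ultimately have "real (100*(12*dd+36)) \<le> real n" by linarith
  then show "100*(12*dd+36) \<le> n" by linarith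
  have "real (dd div 2) \<le> real dd" by simp
  then show "real (dd div 2 + 1) \<le> sqrt (real n)" using hd sf(1) by linarith
qed


lemma final_bound:
  fixes n dd s t :: nat
  assumes hd: "real dd \<le> sqrt (real n) / 1000" and hn: "1000000 \<le> n"
    and ht: "10*t \<le> n" "n < 10*t + 10" and hc: "t choose (dd div 2 + 1) \<le> 2^s"
  shows "1/16 * real dd * ln (real n) \<le> real s"
proof -
  define k where "k = dd div 2 + 1"
  define S where "S = sqrt (real n)"
  note sf = sqrt_facts[OF hn, folded S_def]
  have hk: "real k \<le> S" using size_facts(2)[OF hd hn] unfolding k_def S_def .
  have kpos: "0 < real k" unfolding k_def by simp
  have kd: "real dd / 2 \<le> real k"
  proof -
    have "real dd \<le> 2 * real (dd div 2) + 1" by linarith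
    then show ?thesis unfolding k_def by simp
  qed
  have tn: "real n / 20 \<le> real t" using ht hn by linarith
  have "S / 20 * real k \<le> S / 20 * S" using hk sf(1) by (intro mult_left_mono) auto
  also have "\<dots> = real n / 20" using sf(2) by simp
  also have "\<dots> \<le> real t" by (rule tn)
  finally have r1: "S / 20 * real k \<le> real t" .
  then have ratio: "S / 20 \<le> real t / real k" using kpos by (simp add: le_divide_eq)
  have S1000: "S \<le> S * S / 1000" using sf(1) by (simp add: le_divide_eq mult_right_mono)
  have kt: "k \<le> t"
  proof -
    have "real k \<le> S * S / 1000" using hk S1000 by linarith
    then have "real k \<le> real t" using tn sf(2) by linarith
    then show ?thesis by simp
  qed
  have binom: "(real t / real k) ^ k \<le> 2 ^ s"
  proof -
    have "(real t / real k) ^ k \<le> real (t choose k)" by (rule binomial_ge_n_over_k_pow_k[OF kt])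
    also have "\<dots> \<le> real ((2::nat) ^ s)" using hc unfolding k_def by (simp only: of_nat_le_iff)
    finally show ?thesis by simp
  qed
  have Spos: "0 < S" using sf(1) by linarith
  have "0 < S / 20" using Spos by simp
  then have tkpos: "0 < real t / real k" using ratio by (rule less_le_trans)
  have "ln ((real t / real k) ^ k) \<le> ln (2 ^ s)"
    using binom tkpos by (subst ln_le_cancel_iff) auto
  then have L1: "real k * ln (real t / real k) \<le> real s * ln 2"
    using tkpos by (simp add: ln_realpow)
  have "ln (S / 20) \<le> ln (real t / real k)" using ratio Spos tkpos by (subst ln_le_cancel_iff) auto
  moreover have "ln (S / 20) = ln (real n) / 2 - ln 20"
    using Spos hn unfolding S_def by (simp add: ln_div ln_sqrt)
  moreover have "3 * ln 20 \<le> ln (real n)"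
  proof -
    have "ln ((20::real) ^ 3) \<le> ln (real n)" using hn by (subst ln_le_cancel_iff) auto
    moreover have "ln ((20::real) ^ 3) = 3 * ln 20" by (subst ln_realpow) auto
    ultimately show ?thesis by linarith
  qed
  ultimately have L2: "ln (real n) / 6 \<le> ln (real t / real k)" by linarith
  have lnn: "0 \<le> ln (real n)" using hn by simp
  have "real dd / 2 * (ln (real n) / 6) \<le> real k * (ln (real n) / 6)"
    using kd lnn by (intro mult_right_mono) auto
  also have "\<dots> \<le> real k * ln (real t / real k)" using L2 kpos by (intro mult_left_mono) auto
  also have "\<dots> \<le> real s * ln 2" by (rule L1)
  also have "\<dots> \<le> real s" using ln_2_less_1 by (intro mult_left_le) auto
  finally have "real dd / 2 * (ln (real n) / 6) \<le> real s" .
  moreover have "1/16 * real dd * ln (real n) \<le> real dd / 2 * (ln (real n) / 6)"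
    using lnn by (simp add: field_simps mult_right_mono)
  ultimately show ?thesis by linarith
qed

lemma window_disj:
  fixes \<epsilon> :: real and n l :: nat
  assumes "0 < \<epsilon>" "\<epsilon> < 1" "0 < n" "2 * l \<le> n"
  shows "{x. x \<le> real n \<and> real n \<le> (1 + \<epsilon>) * x} \<inter> {x. x \<le> real l \<and> real l \<le> (1 + \<epsilon>) * x} = {}"
proof (rule ccontr)
  assume "\<not> ?thesis"
  then obtain x where x: "real n \<le> (1 + \<epsilon>) * x" "x \<le> real l" by auto
  have "(1 + \<epsilon>) * x \<le> (1 + \<epsilon>) * real l" using x(2) assms(1) by (intro mult_left_mono) auto
  moreover have "(1 + \<epsilon>) * real l \<le> (1 + \<epsilon>) * (real n / 2)" using assms by (intro mult_left_mono) auto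
  moreover have "0 < (1 - \<epsilon>) * (real n / 2)" using assms by simp
  ultimately show False using x(1) by (simp add: algebra_simps)
qed

lemma main_inner:
  fixes \<epsilon> :: real and dd n s :: nat
  assumes eps: "0 < \<epsilon>" "\<epsilon> < 1" and hd: "real dd \<le> sqrt (real n) / 1000" and hn: "1000000 \<le> n"
    and space: "uses_space s init delta"
    and corr: "\<And>S :: bool list. length S = n \<Longrightarrow>
              measure_pmf.prob (run_alg init delta out S)
                {x. x \<le> real (l_max dd S) \<and> real (l_max dd S) \<le> (1 + \<epsilon>) * x}
              \<ge> 1 - 1 / real n"
  shows "1/16 * real dd * ln (real n) \<le> real s"
proof -
  define k where "k = dd div 2 + 1"
  define t where "t = n div 10"
  define M where "M = n div 2"
  define Cand where "Cand = {3*t..<4*t}"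
  define pre where "pre X = map (\<lambda>y. base n y \<noteq> (y \<in> X)) [0..<M]" for X
  define suf where "suf j = map (\<lambda>y. base n y \<noteq> (y = n - 1 - j)) [M..<n]" for j
  define Win where "Win X j = {x. x \<le> real (l_max dd (pre X @ suf j)) \<and> real (l_max dd (pre X @ suf j)) \<le> (1 + \<epsilon>) * x}" for X j
  define Fam where "Fam = {X. X \<subseteq> Cand \<and> card X = k}"
  have nbig: "100*(12*dd+36) \<le> n" by (rule size_facts(1)[OF hd hn])
  have gen: "a = b * (a div b) + a mod b" "a mod b < b" if "0 < b" for a b :: nat
    using that by auto
  obtain q1 r1 where e1: "dd = 2*q1 + r1" "r1 < 2" "k = q1 + 1"
    by (rule that[of "dd div 2" "dd mod 2"]) (auto simp: k_def)
  obtain q2 r2 where e2: "n = 10*q2 + r2" "r2 < 10" "t = q2"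
    by (rule that[of "n div 10" "n mod 10"]) (auto simp: t_def)
  obtain q3 r3 where e3: "n = 2*q3 + r3" "r3 < 2" "M = q3"
    by (rule that[of "n div 2" "n mod 2"]) (auto simp: M_def)
  have dk: "dd + 1 \<le> 2*k" "2*k \<le> dd + 2" using e1 by linarith+
  have ht: "10*t \<le> n" "n < 10*t + 10" using e2 by linarith+
  have hM: "2*M \<le> n" "n \<le> 2*M + 1" using e3 by linarith+
  have zoneC: "n + 4*(12*dd+36) \<le> 4*z \<and> 2*z + 2*(12*dd+36) + 3 \<le> n" if "z \<in> Cand" for z
  proof -
    have z: "3*t \<le> z" "z < 4*t" using that unfolding Cand_def by auto
    show ?thesis using z nbig ht hn by linarith
  qed
  have CandM: "z < M \<and> M \<le> n - 1 - z \<and> z < n" if "z \<in> Cand" for z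
  proof -
    have z: "3*t \<le> z" "z < 4*t" using that unfolding Cand_def by auto
    have "z < M" "M + z + 1 \<le> n" "z < n" using z ht hM hn by linarith+
    then show ?thesis by linarith
  qed
  have finC: "finite Cand" unfolding Cand_def by simp
  have cardC: "card Cand = t" unfolding Cand_def by simp
  have concat: "pre X @ suf j = map (gf (X \<union> (\<lambda>m. n - 1 - m) ` {j}) n) [0..<n]"
    if X: "X \<subseteq> Cand" and j: "j \<in> Cand" for X j
  proof -
    have Mn': "M \<le> n" using hM by linarith
    have up: "[0..<n] = [0..<M] @ [M..<n]"
      using upt_add_eq_append[of 0 M "n - M"] Mn' by simp
    have a: "map (\<lambda>y. base n y \<noteq> (y \<in> X)) [0..<M] = map (gf (X \<union> (\<lambda>m. n - 1 - m) ` {j}) n) [0..<M]"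
    proof (rule map_cong[OF refl])
      fix y assume "y \<in> set [0..<M]"
      then have "y < M" by simp
      then have "y \<noteq> n - 1 - j" using CandM[OF j] by linarith
      then show "(base n y \<noteq> (y \<in> X)) = gf (X \<union> (\<lambda>m. n - 1 - m) ` {j}) n y" unfolding gf_def by simp
    qed
    have b: "map (\<lambda>y. base n y \<noteq> (y = n - 1 - j)) [M..<n] = map (gf (X \<union> (\<lambda>m. n - 1 - m) ` {j}) n) [M..<n]"
    proof (rule map_cong[OF refl])
      fix y assume "y \<in> set [M..<n]"
      then have "M \<le> y" by simp
      then have "y \<notin> X" using CandM X by fastforce
      then show "(base n y \<noteq> (y = n - 1 - j)) = gf (X \<union> (\<lambda>m. n - 1 - m) ` {j}) n y" unfolding gf_def by auto
    qed
    show ?thesis unfolding pre_def suf_def up using a b by simp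
  qed
  have lenpre: "length (pre X) = M" for X unfolding pre_def by simp
  have lensuf: "length (suf j) = n - M" for j unfolding suf_def by simp
  have Mn: "M \<le> n" using hM by linarith
  have fool: "card Fam \<le> 2 ^ s"
  proof (rule fooling[OF space finC _ _ lenpre])
    show "0 < n" using hn by simp
    show "2 * real (card Cand) < real n" using cardC ht hn by simp
    fix X j assume X: "X \<in> Fam" and j: "j \<in> Cand"
    show "1 - 1 / real n \<le> measure_pmf.prob (run_alg init delta out (pre X @ suf j)) (Win X j)"
      unfolding Win_def by (rule corr) (simp add: lenpre lensuf Mn)
  next
    fix X X' assume X: "X \<in> Fam" and X': "X' \<in> Fam" and ne: "X \<noteq> X'"
    have XC: "X \<subseteq> Cand" "X' \<subseteq> Cand" "card X = k" "card X' = k" using X X' unfolding Fam_def by auto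
    have finX: "finite X" "finite X'" using XC finC finite_subset by blast+
    have "\<not> X \<subseteq> X'"
    proof
      assume "X \<subseteq> X'"
      then have "X = X'" using card_subset_eq[OF finX(2)] XC by simp
      then show False using ne by simp
    qed
    then obtain j where j: "j \<in> X" "j \<notin> X'" by blast
    have jC: "j \<in> Cand" using j XC by blast
    have zX: "\<And>z. z \<in> X \<Longrightarrow> z < n" using XC CandM by blast
    have yes: "l_max dd (pre X @ suf j) = n"
    proof -
      have "HAM_rev (pre X @ suf j) \<le> dd"
        unfolding concat[OF XC(1) jC] by (rule yes_lemma[OF finX(1) j(1) XC(3) zX dk(2)])
      then have "l_max dd (pre X @ suf j) = length (pre X @ suf j)"
        by (intro lmax_full) (simp add: near_palindrome_def)
      then show ?thesis by (simp add: lenpre lensuf Mn)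
    qed
    have no: "2 * l_max dd (pre X' @ suf j) \<le> n"
    proof -
      have len: "length (pre X' @ suf j) = n" by (simp add: lenpre lensuf Mn)
      have "2 * l_max dd (pre X' @ suf j) \<le> length (pre X' @ suf j)"
      proof (rule lmax_le)
        fix p q assume pq: "p \<le> q" "q \<le> length (pre X' @ suf j)" "near_palindrome dd (substr (pre X' @ suf j) p q)"
        show "2 * (q - p) \<le> length (pre X' @ suf j)"
        proof (rule ccontr)
          assume "\<not> 2 * (q - p) \<le> length (pre X' @ suf j)"
          then have w: "n < 2 * (q - p)" using len by simp
          have zone: "\<And>z. z \<in> X' \<union> {j} \<Longrightarrow> n + 4*(12*dd+36) \<le> 4*z \<and> 2*z + 2*(12*dd+36) + 3 \<le> n"
            using zoneC XC jC by blast
          have "dd < HAM_rev (substr (map (gf (X' \<union> (\<lambda>m. n - 1 - m) ` {j}) n) [0..<n]) p q)"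
          proof -
            have qn: "q \<le> n" using pq(2) len by linarith
            show ?thesis by (rule no_lemma[OF finX(2) j(2) XC(4) zone dk nbig pq(1) qn w])
          qed
          then show False using pq(3) unfolding concat[OF XC(2) jC] near_palindrome_def by simp
        qed
      qed
      then show ?thesis using len by simp
    qed
    show "\<exists>q\<in>Cand. Win X q \<inter> Win X' q = {}"
      using window_disj[OF eps _ no] hn jC yes unfolding Win_def by auto
  qed
  have "card Fam = t choose k" unfolding Fam_def using n_subsets[OF finC] cardC by simp
  then have "t choose (dd div 2 + 1) \<le> 2 ^ s" using fool unfolding k_def by simp
  then show ?thesis by (rule final_bound[OF hd hn ht])
qed

theorem theorem4:
  fixes \<epsilon> :: real and d :: "nat \<Rightarrow> nat"
  assumes "0 < \<epsilon>" and "\<epsilon> < 1"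
    and "(\<lambda>n. real (d n)) \<in> o(\<lambda>n. sqrt (real n))"
  shows "\<exists>c>0. \<exists>N. \<forall>n\<ge>N. \<forall>s init delta out.
           uses_space s init delta \<and>
           (\<forall>S :: bool list. length S = n \<longrightarrow>
              measure_pmf.prob (run_alg init delta out S)
                {x. x \<le> real (l_max (d n) S) \<and> real (l_max (d n) S) \<le> (1 + \<epsilon>) * x}
              \<ge> 1 - 1 / real n)
           \<longrightarrow> real s \<ge> c * real (d n) * ln (real n)"
proof -
  have "eventually (\<lambda>n. norm (real (d n)) \<le> (1/1000) * norm (sqrt (real n))) at_top"
    by (rule landau_o.smallD[OF assms(3)]) simp
  then have "eventually (\<lambda>n. real (d n) \<le> sqrt (real n) / 1000) at_top" by simp
  then obtain N1 where N1: "\<And>n. N1 \<le> n \<Longrightarrow> real (d n) \<le> sqrt (real n) / 1000"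
    unfolding eventually_at_top_linorder by auto
  show ?thesis
  proof (rule exI[of _ "1/16"], rule conjI)
    show "(1/16::real) > 0" by simp
    show "\<exists>N. \<forall>n\<ge>N. \<forall>s init delta out.
           uses_space s init delta \<and>
           (\<forall>S :: bool list. length S = n \<longrightarrow>
              measure_pmf.prob (run_alg init delta out S)
                {x. x \<le> real (l_max (d n) S) \<and> real (l_max (d n) S) \<le> (1 + \<epsilon>) * x}
              \<ge> 1 - 1 / real n)
           \<longrightarrow> real s \<ge> 1/16 * real (d n) * ln (real n)"
    proof (rule exI[of _ "max N1 1000000"], intro allI impI)
      fix n s init delta out
      assume n: "max N1 1000000 \<le> n"
        and H: "uses_space s init delta \<and>
           (\<forall>S :: bool list. length S = n \<longrightarrow>
              measure_pmf.prob (run_alg init delta out S)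
                {x. x \<le> real (l_max (d n) S) \<and> real (l_max (d n) S) \<le> (1 + \<epsilon>) * x}
              \<ge> 1 - 1 / real n)"
      show "real s \<ge> 1/16 * real (d n) * ln (real n)"
      proof (rule main_inner[OF assms(1,2)])
        show "real (d n) \<le> sqrt (real n) / 1000" using N1 n by simp
        show "1000000 \<le> n" using n by simp
        show "uses_space s init delta" using H by simp
        fix S :: "bool list" assume "length S = n"
        then show "1 - 1 / real n \<le> measure_pmf.prob (run_alg init delta out S)
                {x. x \<le> real (l_max (d n) S) \<and> real (l_max (d n) S) \<le> (1 + \<epsilon>) * x}"
          using H by simp
      qed
    qed
  qed
qed

end
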